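(* The solutions $\phi=\phi(b^2,s)$ of the PDE $\phi_{22}=2(\phi_1-s\phi_{12})$ are given by $$\phi(b^2,s)=f(b^2-s^2)+2s\int_0^s f'(b^2-\sigma^2)\,d\sigma+g(b^2)\,s,$$ where $f$ and $g$ are arbitrary smooth functions.
   Context: $\phi(b^2,s)$ is a smooth function of two variables; $\phi_1$ denotes the partial derivative with respect to the first variable $b^2$ and $\phi_2$ the partial derivative with respect to $s$; similarly $\phi_{12},\phi_{22}$. *)

theory Defs
  imports "HOL-Analysis.Analysis"
begin

definition smooth1 :: "(real \<Rightarrow> real) \<Rightarrow> bool" where
  "smooth1 f \<longleftrightarrow> (\<exists>D :: nat \<Rightarrow> real \<Rightarrow> real. D 0 = f \<and>
     (\<forall>n x. (D n has_real_derivative D (Suc n) x) (at x)))"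

definition smooth2 :: "(real \<Rightarrow> real \<Rightarrow> real) \<Rightarrow> bool" where
  "smooth2 F \<longleftrightarrow> (\<exists>D :: nat \<Rightarrow> nat \<Rightarrow> real \<Rightarrow> real \<Rightarrow> real. D 0 0 = F \<and>
     (\<forall>i j x y. ((\<lambda>x'. D i j x' y) has_real_derivative D (Suc i) j x y) (at x) \<and>
                ((\<lambda>y'. D i j x y') has_real_derivative D i (Suc j) x y) (at y)) \<and>
     (\<forall>i j. continuous_on UNIV (\<lambda>p. D i j (fst p) (snd p))))"

definition pd1 :: "(real \<Rightarrow> real \<Rightarrow> real) \<Rightarrow> real \<Rightarrow> real \<Rightarrow> real" where
  "pd1 F x y = deriv (\<lambda>x'. F x' y) x"

definition pd2 :: "(real \<Rightarrow> real \<Rightarrow> real) \<Rightarrow> real \<Rightarrow> real \<Rightarrow> real" where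
  "pd2 F x y = deriv (\<lambda>y'. F x y') y"

definition oint :: "real \<Rightarrow> real \<Rightarrow> (real \<Rightarrow> real) \<Rightarrow> real" where
  "oint a b h = (if a \<le> b then integral {a..b} h else - integral {b..a} h)"

end

theory Submission
  imports Defs
begin

lemma chain2:
  fixes F Fu Fs :: "real \<Rightarrow> real \<Rightarrow> real"
  assumes du: "\<And>x y. ((\<lambda>x'. F x' y) has_real_derivative Fu x y) (at x)"
    and ds: "\<And>x y. ((\<lambda>y'. F x y') has_real_derivative Fs x y) (at y)"
    and cs: "continuous_on UNIV (\<lambda>p. Fs (fst p) (snd p))"
    and da: "(a has_real_derivative a') (at t)"
    and db: "(b has_real_derivative b') (at t)"
  shows "((\<lambda>t. F (a t) (b t)) has_real_derivative (Fu (a t) (b t) * a' + Fs (a t) (b t) * b')) (at t)"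
proof -
  let ?x = "a t" and ?y = "b t"
  have fx: "((\<lambda>x. F x ?y) has_derivative (*) (Fu ?x ?y)) (at ?x within UNIV)"
    using du[where x="a t" and y="b t"] by (simp add: has_field_derivative_def)
  have fy: "\<And>x y. x \<in> UNIV \<Longrightarrow> y \<in> UNIV \<Longrightarrow> ((\<lambda>y. F x y) has_derivative blinfun_apply (blinfun_mult_right (Fs x y))) (at y within UNIV)"
    using ds by (simp add: has_field_derivative_def)
  have cont: "continuous (at (?x, ?y) within UNIV \<times> UNIV) (\<lambda>(x, y). blinfun_mult_right (Fs x y))"
  proof -
    have "continuous_on UNIV (\<lambda>p. blinfun_mult_right (Fs (fst p) (snd p)))"
      by (intro continuous_on_compose2[OF _ cs] linear_continuous_on bounded_linear_blinfun_mult_right) auto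
    then show ?thesis
      by (simp add: continuous_on_eq_continuous_within split_beta')
  qed
  have "((\<lambda>(x, y). F x y) has_derivative (\<lambda>(tx, ty). Fu ?x ?y * tx + blinfun_apply (blinfun_mult_right (Fs ?x ?y)) ty)) (at (?x, ?y) within UNIV \<times> UNIV)"
    by (rule has_derivative_partialsI[OF fx fy cont]) auto
  then have H: "((\<lambda>(x, y). F x y) has_derivative (\<lambda>(tx, ty). Fu ?x ?y * tx + Fs ?x ?y * ty)) (at (?x, ?y))"
    by simp
  have P: "((\<lambda>t. (a t, b t)) has_derivative (\<lambda>h. (h * a', h * b'))) (at t)"
    using has_derivative_Pair[OF da[unfolded has_field_derivative_def] db[unfolded has_field_derivative_def]]
    by (simp add: mult.commute)
  have "((\<lambda>t. (\<lambda>(x, y). F x y) (a t, b t)) has_derivative (\<lambda>h. (\<lambda>(tx, ty). Fu ?x ?y * tx + Fs ?x ?y * ty) (h * a', h * b'))) (at t)"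
    by (rule diff_chain_at[OF P H, unfolded o_def])
  then show ?thesis
    unfolding has_field_derivative_def
    by (simp add: has_derivative_eq_rhs algebra_simps) (erule has_derivative_eq_rhs, auto simp: fun_eq_iff algebra_simps)
qed

lemma oint_deriv:
  fixes h :: "real \<Rightarrow> real"
  assumes hc: "continuous_on UNIV h"
  shows "((\<lambda>s. oint 0 s h) has_real_derivative h s) (at s)"
proof -
  define M where "M = \<bar>s\<bar> + 1"
  have M: "M > 0" "-M < s" "s < M" using M_def by auto
  define G where "G x = integral {-M..x} h" for x
  have int: "h integrable_on {a..b}" for a b
    by (rule integrable_continuous_real) (rule continuous_on_subset[OF hc], auto)
  have eq: "oint 0 x h = G x - G 0" if "x \<in> {-M<..<M}" for x
  proof (cases "0 \<le> x")
    case True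
    have "integral {-M..0} h + integral {0..x} h = integral {-M..x} h"
      by (rule Henstock_Kurzweil_Integration.integral_combine[where a="-M" and c=0 and b=x and f=h]) (use that True M int in auto)
    then show ?thesis using True by (simp add: oint_def G_def)
  next
    case False
    have "integral {-M..x} h + integral {x..0} h = integral {-M..0} h"
      by (rule Henstock_Kurzweil_Integration.integral_combine[where a="-M" and c=x and b=0 and f=h]) (use that False M int in auto)
    then show ?thesis using False by (simp add: oint_def G_def)
  qed
  have "(G has_real_derivative h s) (at s within {-M..M})"
    unfolding G_def
    by (rule integral_has_real_derivative) (use M in \<open>auto intro: continuous_on_subset[OF hc]\<close>)
  then have "(G has_real_derivative h s) (at s)"
    using M by (subst (asm) at_within_interior) auto
  then have d: "((\<lambda>x. G x - G 0) has_real_derivative h s) (at s)"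
    by (auto intro!: derivative_eq_intros)
  show ?thesis
    by (rule has_field_derivative_transform_within_open[OF d, of "{-M<..<M}"]) (use M eq in auto)
qed

lemma ode0:
  fixes h h' :: "real \<Rightarrow> real"
  assumes d: "\<And>s. (h has_real_derivative h' s) (at s)"
    and e: "\<And>s. s * h' s = h s" and z: "h' 0 = 0" and s: "s > 0"
  shows "h s = 0"
proof -
  have h0: "h 0 = 0" using e[of 0] by simp
  have const: "h t / t = h s / s" if t: "0 < t" "t < s" for t
  proof -
    have "h s / s = h t / t"
    proof (rule DERIV_isconst2[where f="\<lambda>x. h x / x"])
      show "t < s" using t by simp
      show "continuous_on {t..s} (\<lambda>x. h x / x)"
        using t by (auto intro!: continuous_intros continuous_at_imp_continuous_on DERIV_isCont[OF d])
      fix x assume x: "t < x" "x < s"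
      show "((\<lambda>x. h x / x) has_real_derivative 0) (at x)"
      proof -
        have "((\<lambda>x. h x / x) has_real_derivative (h' x * x - h x * 1) / (x * x)) (at x)"
          using x t by (intro DERIV_divide d DERIV_ident) auto
        moreover have "(h' x * x - h x * 1) / (x * x) = 0" using e[of x] by (simp add: mult.commute)
        ultimately show "((\<lambda>x. h x / x) has_real_derivative 0) (at x)" by metis
      qed
    qed (use t in auto)
    then show ?thesis by simp
  qed
  have "(h has_real_derivative h' 0) (at 0 within {0<..})"
    using d has_field_derivative_at_within by blast
  then have L1: "((\<lambda>y. (h y - h 0) / (y - 0)) \<longlongrightarrow> 0) (at_right 0)"
    using z by (simp add: has_field_derivative_iff)
  have ev: "\<forall>\<^sub>F y in at_right 0. h s / s = (h y - h 0) / (y - 0)"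
    using eventually_at_right_real[OF s] by eventually_elim (use const h0 in auto)
  have L2: "((\<lambda>y. (h y - h 0) / (y - 0)) \<longlongrightarrow> h s / s) (at_right 0)"
    by (rule Lim_transform_eventually[OF tendsto_const ev])
  have "h s / s = 0" using tendsto_unique[OF _ L2 L1] by simp
  then show ?thesis using s by simp
qed

lemma ode:
  fixes h h' :: "real \<Rightarrow> real"
  assumes d: "\<And>s. (h has_real_derivative h' s) (at s)"
    and e: "\<And>s. s * h' s = h s" and z: "h' 0 = 0"
  shows "h s = 0"
proof -
  consider "s > 0" | "s = 0" | "s < 0" by linarith
  then show ?thesis
  proof cases
    case 1 then show ?thesis using ode0[OF d e z] by blast
  next
    case 2 then show ?thesis using e[of 0] by simp
  next
    case 3
    have d2: "((\<lambda>x. h (- x)) has_real_derivative - h' (- x)) (at x)" for x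
      using DERIV_chain2[OF d DERIV_minus[OF DERIV_ident]] by simp
    have "h (- (- s)) = 0"
      by (rule ode0[OF d2, of "- s"]) (use z 3 in \<open>auto simp: e[symmetric]\<close>)
    then show ?thesis by simp
  qed
qed

lemma R_deriv:
  fixes f :: "real \<Rightarrow> real" and Df :: "nat \<Rightarrow> real \<Rightarrow> real"
  assumes D0: "Df 0 = f" and Dd: "\<And>n x. (Df n has_real_derivative Df (Suc n) x) (at x)"
  shows "((\<lambda>s. f (u - s\<^sup>2) + 2 * s * oint 0 s (\<lambda>\<sigma>. deriv f (u - \<sigma>\<^sup>2)) + c * s)
           has_real_derivative 2 * oint 0 s (\<lambda>\<sigma>. deriv f (u - \<sigma>\<^sup>2)) + c) (at s)"
proof -
  have df: "deriv f = Df 1"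
    using Dd[of 0] D0 by (auto simp: fun_eq_iff intro!: DERIV_imp_deriv)
  have cont: "continuous_on UNIV (\<lambda>\<sigma>. Df 1 (u - \<sigma>\<^sup>2))"
    by (intro continuous_at_imp_continuous_on ballI continuous_at_compose[unfolded o_def, OF _ DERIV_isCont[OF Dd]])
       (auto intro!: continuous_intros)
  have I: "((\<lambda>s. oint 0 s (\<lambda>\<sigma>. Df 1 (u - \<sigma>\<^sup>2))) has_real_derivative Df 1 (u - s\<^sup>2)) (at s)"
    by (rule oint_deriv[OF cont])
  have F: "((\<lambda>s. f (u - s\<^sup>2)) has_real_derivative Df 1 (u - s\<^sup>2) * (- (2 * s))) (at s)"
  proof -
    have g: "((\<lambda>s. u - s\<^sup>2) has_real_derivative - (2 * s)) (at s)"
      by (auto intro!: derivative_eq_intros)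
    show ?thesis using DERIV_chain2[OF Dd[where n=0 and x="u - s\<^sup>2", unfolded D0] g] by simp
  qed
  have "((\<lambda>s. f (u - s\<^sup>2) + 2 * s * oint 0 s (\<lambda>\<sigma>. Df 1 (u - \<sigma>\<^sup>2)) + c * s)
           has_real_derivative Df 1 (u - s\<^sup>2) * (- (2 * s)) + (2 * oint 0 s (\<lambda>\<sigma>. Df 1 (u - \<sigma>\<^sup>2)) + 2 * s * Df 1 (u - s\<^sup>2)) + c) (at s)"
    by (intro DERIV_add F DERIV_cmult_right) (use I[unfolded One_nat_def] in \<open>auto intro!: derivative_eq_intros\<close>)
  then show ?thesis by (simp add: df algebra_simps)
qed

theorem lemma5p1:
  fixes \<phi> :: "real \<Rightarrow> real \<Rightarrow> real"
  assumes "smooth2 \<phi>"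
  shows "(\<forall>u s. pd2 (pd2 \<phi>) u s = 2 * (pd1 \<phi> u s - s * pd2 (pd1 \<phi>) u s)) \<longleftrightarrow>
         (\<exists>f g. smooth1 f \<and> smooth1 g \<and>
            (\<forall>u s. \<phi> u s = f (u - s\<^sup>2) + 2 * s * oint 0 s (\<lambda>\<sigma>. deriv f (u - \<sigma>\<^sup>2)) + g u * s))"
proof -
  obtain D :: "nat \<Rightarrow> nat \<Rightarrow> real \<Rightarrow> real \<Rightarrow> real" where D0: "D 0 0 = \<phi>"
    and Du: "\<And>i j x y. ((\<lambda>x'. D i j x' y) has_real_derivative D (Suc i) j x y) (at x)"
    and Ds: "\<And>i j x y. ((\<lambda>y'. D i j x y') has_real_derivative D i (Suc j) x y) (at y)"
    and Dc: "\<And>i j. continuous_on UNIV (\<lambda>p. D i j (fst p) (snd p))"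
    using assms unfolding smooth2_def by blast
  have p1: "pd1 (D i j) = D (Suc i) j" for i j
    by (auto simp: fun_eq_iff pd1_def intro!: DERIV_imp_deriv Du)
  have p2: "pd2 (D i j) = D i (Suc j)" for i j
    by (auto simp: fun_eq_iff pd2_def intro!: DERIV_imp_deriv Ds)
  have pde_iff: "(\<forall>u s. pd2 (pd2 \<phi>) u s = 2 * (pd1 \<phi> u s - s * pd2 (pd1 \<phi>) u s)) \<longleftrightarrow>
      (\<forall>u s. D 0 2 u s = 2 * (D 1 0 u s - s * D 1 1 u s))"
    unfolding D0[symmetric] p1 p2 by (simp add: numeral_2_eq_2)
  define X where "X u s = s * D 0 1 u s - D 0 0 u s" for u s
  have Xu: "((\<lambda>u'. X u' s) has_real_derivative s * D 1 1 u s - D 1 0 u s) (at u)" for u s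
  proof -
    have a: "((\<lambda>x. D 0 1 x s) has_real_derivative D 1 1 u s) (at u)"
      using Du[where i=0 and j=1 and x=u and y=s] by simp
    have b: "((\<lambda>x. D 0 0 x s) has_real_derivative D 1 0 u s) (at u)"
      using Du[where i=0 and j=0 and x=u and y=s] by simp
    show ?thesis unfolding X_def using DERIV_diff[OF DERIV_cmult[OF a, of s] b] by simp
  qed
  have Xs: "((\<lambda>s'. X u s') has_real_derivative s * D 0 2 u s) (at s)" for u s
  proof -
    have a: "((\<lambda>y. D 0 1 u y) has_real_derivative D 0 2 u s) (at s)"
      using Ds[where i=0 and j=1 and x=u and y=s] by (simp add: numeral_2_eq_2)
    have b: "((\<lambda>y. D 0 0 u y) has_real_derivative D 0 1 u s) (at s)"
      using Ds[where i=0 and j=0 and x=u and y=s] by simp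
    show ?thesis unfolding X_def using DERIV_diff[OF DERIV_mult[OF DERIV_ident a] b] by (simp add: mult.commute)
  qed
  define I where "I f u s = oint 0 s (\<lambda>\<sigma>. deriv f (u - \<sigma>\<^sup>2))" for f :: "real \<Rightarrow> real" and u s
  define R where "R f g u s = f (u - s\<^sup>2) + 2 * s * I f u s + g u * s" for f g :: "real \<Rightarrow> real" and u s
  have Rd: "((\<lambda>s. R f g u s) has_real_derivative 2 * I f u s + g u) (at s)"
    if sf0: "smooth1 f" for f g u s
  proof -
    obtain Df where "Df 0 = f" "\<And>n x. (Df n has_real_derivative Df (Suc n) x) (at x)"
      using sf0 unfolding smooth1_def by blast
    from R_deriv[OF this, of u "g u" s] show ?thesis
      unfolding R_def I_def by (simp add: mult.commute)
  qed
  have RX: "s * (2 * I f u s + g u) - R f g u s = - f (u - s\<^sup>2)" for f g u s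
    unfolding R_def by (simp add: algebra_simps)
  have I0: "I f u 0 = 0" for f u by (simp add: I_def oint_def)
  show ?thesis
    unfolding pde_iff
  proof
    assume pde: "\<forall>u s. D 0 2 u s = 2 * (D 1 0 u s - s * D 1 1 u s)"
    have Xc: "X (q + t\<^sup>2) t = X q 0" for q t
    proof -
      have "((\<lambda>t. X (q + t\<^sup>2) t) has_real_derivative 0) (at t)" for t
      proof -
        have cs: "continuous_on UNIV (\<lambda>p. snd p * D 0 2 (fst p) (snd p))"
          by (intro continuous_intros Dc)
        have a: "((\<lambda>t. q + t\<^sup>2) has_real_derivative 2 * t) (at t)"
          by (auto intro!: derivative_eq_intros)
        have b: "((\<lambda>t. t) has_real_derivative 1) (at t)" by (rule DERIV_ident)
        from chain2[where F=X, OF Xu Xs cs a b]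
        show ?thesis using pde by (simp add: algebra_simps)
      qed
      then show ?thesis using DERIV_isconst_all by (metis (no_types, lifting) add_0_right power_zero_numeral)
    qed
    have XF: "X u s = - D 0 0 (u - s\<^sup>2) 0" for u s
      using Xc[of "u - s\<^sup>2" s] by (simp add: X_def)
    define f where "f x = D 0 0 x 0" for x
    define g where "g x = D 0 1 x 0" for x
    have sf: "smooth1 f" unfolding smooth1_def
      by (rule exI[where x="\<lambda>n x. D n 0 x 0"]) (auto simp: f_def fun_eq_iff intro: Du)
    have sg: "smooth1 g" unfolding smooth1_def
      by (rule exI[where x="\<lambda>n x. D n 1 x 0"]) (auto simp: g_def fun_eq_iff intro: Du)
    have "\<phi> u s = R f g u s" for u s
    proof -
      let ?h = "\<lambda>s. D 0 0 u s - R f g u s"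
      let ?h' = "\<lambda>s. D 0 1 u s - (2 * I f u s + g u)"
      have "?h s = 0"
      proof (rule ode[where h="?h" and h'="?h'"])
        show "(?h has_real_derivative ?h' s) (at s)" for s
          using DERIV_diff[OF Ds[where i=0 and j=0 and x=u and y=s] Rd[OF sf, of g u s]] by simp
        show "s * ?h' s = ?h s" for s
          using XF[of u s] RX[of s f u g] by (simp add: X_def f_def algebra_simps)
        show "?h' 0 = 0" by (simp add: I0 g_def)
      qed
      then show ?thesis using D0 by simp
    qed
    then show "\<exists>f g. smooth1 f \<and> smooth1 g \<and>
            (\<forall>u s. \<phi> u s = f (u - s\<^sup>2) + 2 * s * oint 0 s (\<lambda>\<sigma>. deriv f (u - \<sigma>\<^sup>2)) + g u * s)"
      using sf sg unfolding R_def I_def by blast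
  next
    assume "\<exists>f g. smooth1 f \<and> smooth1 g \<and>
            (\<forall>u s. \<phi> u s = f (u - s\<^sup>2) + 2 * s * oint 0 s (\<lambda>\<sigma>. deriv f (u - \<sigma>\<^sup>2)) + g u * s)"
    then obtain f g where sf: "smooth1 f" and phi: "\<And>u s. \<phi> u s = R f g u s"
      unfolding R_def I_def by blast
    obtain Df where Df0: "Df 0 = f" and Dfd: "\<And>n x. (Df n has_real_derivative Df (Suc n) x) (at x)"
      using sf unfolding smooth1_def by metis
    have D01: "D 0 1 u s = 2 * I f u s + g u" for u s
      using DERIV_unique[OF Ds[where i=0 and j=0 and x=u and y=s, unfolded D0 phi[abs_def]] Rd[OF sf, of g u s]]
      by simp
    have XF: "X u s = - Df 0 (u - s\<^sup>2)" for u s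
      using RX[of s f u g] D01[of u s] by (simp add: X_def D0 phi Df0)
    have eq: "s * (D 0 2 u s - 2 * (D 1 0 u s - s * D 1 1 u s)) = 0" for u s
    proof -
      have gu: "((\<lambda>u. u - s\<^sup>2) has_real_derivative 1) (at u)"
        by (auto intro!: derivative_eq_intros)
      have gs: "((\<lambda>s. u - s\<^sup>2) has_real_derivative - (2 * s)) (at s)"
        by (auto intro!: derivative_eq_intros)
      have A: "((\<lambda>u'. X u' s) has_real_derivative - (Df 1 (u - s\<^sup>2) * 1)) (at u)"
        unfolding XF using DERIV_minus[OF DERIV_chain2[OF Dfd[where n=0 and x="u - s\<^sup>2"] gu]] by simp
      have B: "((\<lambda>s'. X u s') has_real_derivative - (Df 1 (u - s\<^sup>2) * - (2 * s))) (at s)"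
        unfolding XF using DERIV_minus[OF DERIV_chain2[OF Dfd[where n=0 and x="u - s\<^sup>2"] gs]] by simp
      have a: "D 1 0 u s - s * D 1 1 u s = Df 1 (u - s\<^sup>2)"
        using DERIV_unique[OF Xu A] by simp
      have b: "s * D 0 2 u s = 2 * s * Df 1 (u - s\<^sup>2)"
        using DERIV_unique[OF Xs B] by (simp only: mult_minus_right minus_minus mult.assoc mult.commute mult.left_commute)
      have "s * (D 0 2 u s - 2 * (D 1 0 u s - s * D 1 1 u s)) = s * D 0 2 u s - 2 * s * (D 1 0 u s - s * D 1 1 u s)"
        by (simp add: algebra_simps)
      also have "\<dots> = 0" unfolding a b by simp
      finally show ?thesis .
    qed
    show "\<forall>u s. D 0 2 u s = 2 * (D 1 0 u s - s * D 1 1 u s)"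
    proof (intro allI)
      fix u s
      let ?E = "\<lambda>s. D 0 2 u s - 2 * (D 1 0 u s - s * D 1 1 u s)"
      have nz: "?E t = 0" if "t \<noteq> 0" for t using eq[of t u] that by simp
      have "?E s = 0"
      proof (cases "s = 0")
        case False then show ?thesis using nz by simp
      next
        case True
        have c: "isCont ?E 0"
          by (intro continuous_intros DERIV_isCont[OF Ds])
        have L1: "(?E \<longlongrightarrow> ?E 0) (at 0)" using c by (simp add: isCont_def)
        have ev: "\<forall>\<^sub>F t in at 0. 0 = ?E t"
          unfolding eventually_at_filter by (rule always_eventually) (use nz in auto)
        have L2: "(?E \<longlongrightarrow> 0) (at 0)"
          by (rule Lim_transform_eventually[OF tendsto_const ev])
        have "?E 0 = 0" using tendsto_unique[OF _ L1 L2] by simp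
        then show ?thesis using True by simp
      qed
      then show "D 0 2 u s = 2 * (D 1 0 u s - s * D 1 1 u s)" by simp
    qed
  qed
qed

end
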